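(* Let $\lambda\ge L_\varphi^2$. Then $\sum_{k=1}^{K_T}\sum_{t=t_k}^{t_{k+1}-1}B^{2,t_k}_{s_t,a_t}\le\frac{12d}{\kappa}\beta_T^2\log\big(1+\frac{T\mathcal UL_\varphi^2}{\lambda d}\big)$.
   Context: Setting: MNL model with finite $\mathcal S,\mathcal A$, reachable sets $\mathcal S_{s,a}$, $\mathcal U=\max|\mathcal S_{s,a}|$, features $\varphi\in\mathbb R^d$, $p(s'\mid s,a,\theta)=\exp(\varphi(s,a,s')^\top\theta)/\sum_{s''\in\mathcal S_{s,a}}\exp(\varphi(s,a,s'')^\top\theta)$; assumptions (A1) $\|\varphi\|_2\le L_\varphi$, $\|\theta^*\|_2\le L_\theta$, $\Theta=\{\|\theta\|_2\le L_\theta\}$; (A2) $\inf_{\theta\in\Theta}p(s'\mid s_t,a_t,\theta)p(s''\mid s_t,a_t,\theta)\ge\kappa\in(0,1)$ for all $t$, $s',s''\in\mathcal S_{s_t,a_t}$; (A3) each $\mathcal S_{s,a}$ has $s'$ with $\varphi(s,a,s')=0$. Trajectory and episodes from \texttt{UCMNLK}: online estimator with $\Sigma_1=\lambda I_d$, $\Sigma_{t+1}=\Sigma_t+\nabla^2\ell_t(\widehat\theta_{t+1})$ ($\ell_t$ the multinomial log-loss of step $t$, $\widehat\theta_{t+1}\in\Theta$); episodes $k=1..K_T$ start at $t_k$ ($t_{K_T+1}=T+1$), a new one starting when $\det\Sigma_t>2\det\Sigma_{t_k}$. $\beta_t>0$ is nondecreasing in $t$, and $B^{2,t}_{s,a}=3\beta_t^2\max_{s'\in\mathcal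 S_{s,a}}\|\varphi(s,a,s')\|^2_{\Sigma_t^{-1}}$. *)

theory Defs
  imports "HOL-Analysis.Analysis"
begin

definition outer :: "real^'d \<Rightarrow> real^'d \<Rightarrow> real^'d^'d" where
  "outer x y = (\<chi> i j. x $ i * y $ j)"

text \<open>MNL transition probability p(s' | s,a,theta); here phi = varphi(s,a,.) and S = S_{s,a}.\<close>
definition mnl_prob :: "('s \<Rightarrow> real^'d) \<Rightarrow> 's set \<Rightarrow> real^'d \<Rightarrow> 's \<Rightarrow> real" where
  "mnl_prob phi S \<theta> s' = exp (phi s' \<bullet> \<theta>) / (\<Sum>s''\<in>S. exp (phi s'' \<bullet> \<theta>))"

text \<open>Hessian (w.r.t. theta) of the multinomial log-loss of one step, in closed form:
  sum_s' p(s') phi(s') phi(s')^T - (sum_s' p(s') phi(s')) (sum_s' p(s') phi(s'))^T.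
  It does not depend on the observed next state.\<close>
definition mnl_hess :: "('s \<Rightarrow> real^'d) \<Rightarrow> 's set \<Rightarrow> real^'d \<Rightarrow> real^'d^'d" where
  "mnl_hess phi S \<theta> =
     (let m = (\<Sum>s'\<in>S. mnl_prob phi S \<theta> s' *\<^sub>R phi s')
      in (\<Sum>s'\<in>S. mnl_prob phi S \<theta> s' *\<^sub>R outer (phi s') (phi s')) - outer m m)"

definition wnorm_sq_inv :: "real^'d^'d \<Rightarrow> real^'d \<Rightarrow> real" where
  "wnorm_sq_inv M x = x \<bullet> (matrix_inv M *v x)"

definition mnl_U :: "('s::finite \<Rightarrow> 'a::finite \<Rightarrow> 's set) \<Rightarrow> nat" where
  "mnl_U Ssa = Max ((\<lambda>p. card (Ssa (fst p) (snd p))) ` UNIV)"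

definition Bsq :: "(nat \<Rightarrow> real) \<Rightarrow> (nat \<Rightarrow> real^'d^'d) \<Rightarrow> ('s \<Rightarrow> 'a \<Rightarrow> 's \<Rightarrow> real^'d)
                   \<Rightarrow> ('s \<Rightarrow> 'a \<Rightarrow> 's set) \<Rightarrow> nat \<Rightarrow> 's \<Rightarrow> 'a \<Rightarrow> real" where
  "Bsq \<beta> \<Sigma> \<phi> Ssa t s a =
     3 * (\<beta> t)\<^sup>2 * Max ((\<lambda>s'. wnorm_sq_inv (\<Sigma> t) (\<phi> s a s')) ` Ssa s a)"

end

theory Submission
  imports Defs
begin

lemma minv:
  fixes A :: "real^'n^'n"
  assumes "det A \<noteq> 0"
  shows "A ** matrix_inv A = mat 1" "matrix_inv A ** A = mat 1"
proof -
  have "invertible A" using assms invertible_det_nz by blast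
  then have "\<exists>A'. A ** A' = mat 1 \<and> A' ** A = mat 1" unfolding invertible_def .
  then have "A ** matrix_inv A = mat 1 \<and> matrix_inv A ** A = mat 1"
    unfolding matrix_inv_def by (rule someI_ex)
  then show "A ** matrix_inv A = mat 1" "matrix_inv A ** A = mat 1" by auto
qed

lemma minv_v:
  fixes A :: "real^'n^'n"
  assumes "det A \<noteq> 0"
  shows "A *v (matrix_inv A *v x) = x" "matrix_inv A *v (A *v x) = x"
  by (simp_all add: matrix_vector_mul_assoc minv[OF assms])

lemma minv_unique:
  fixes A B :: "real^'n^'n"
  assumes "det A \<noteq> 0" "B ** A = mat 1"
  shows "B = matrix_inv A"
proof -
  have "B = B ** (A ** matrix_inv A)" by (simp add: minv[OF assms(1)])
  also have "\<dots> = (B ** A) ** matrix_inv A" by (simp add: matrix_mul_assoc)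
  also have "\<dots> = matrix_inv A" using assms(2) by simp
  finally show ?thesis .
qed

lemma minv_sym:
  fixes A :: "real^'n^'n"
  assumes "transpose A = A" "det A \<noteq> 0"
  shows "transpose (matrix_inv A) = matrix_inv A"
proof -
  have "transpose (matrix_inv A) ** A = transpose (A ** matrix_inv A)"
    by (metis assms(1) matrix_transpose_mul)
  also have "\<dots> = mat 1" by (simp add: minv[OF assms(2)])
  finally show ?thesis using minv_unique[OF assms(2)] by blast
qed

lemma sym_dot:
  fixes M :: "real^'n^'n"
  assumes "transpose M = M"
  shows "x \<bullet> (M *v y) = y \<bullet> (M *v x)"
proof -
  have "x \<bullet> (M *v y) = (x v* M) \<bullet> y" by (simp add: dot_lmul_matrix)
  also have "x v* M = transpose M *v x" by simp
  also have "\<dots> = M *v x" using assms by simp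
  finally show ?thesis by (simp add: inner_commute)
qed

lemma outer_mulv: "outer u v *v y = (v \<bullet> y) *\<^sub>R u"
  by (simp add: outer_def vec_eq_iff matrix_vector_mult_def inner_vec_def sum_distrib_left algebra_simps)

lemma mult_outer: "(A::real^'n^'n) ** outer u v = outer (A *v u) v"
  by (simp add: outer_def vec_eq_iff matrix_matrix_mult_def matrix_vector_mult_def sum_distrib_left mult.left_commute mult.commute)

lemma transpose_outer: "transpose (outer u u) = outer u u"
  by (simp add: outer_def vec_eq_iff transpose_def)

lemma dot_outer: "x \<bullet> (outer v v *v x) = (v \<bullet> x)^2"
  by (simp add: outer_mulv power2_eq_square inner_commute)

lemma det_I_outer:
  fixes u w :: "real^'n"
  shows "det (mat 1 + outer u w) = 1 + u \<bullet> w"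
proof (cases "u = 0")
  case True
  have "outer u w = 0" using True by (simp add: outer_def vec_eq_iff)
  then show ?thesis using True by simp
next
  case False
  then obtain k where uk: "u $ k \<noteq> 0" by (auto simp: vec_eq_iff)
  define M where "M = mat 1 + outer u w"
  define c where "c = 1 + u \<bullet> w"
  have Mu: "M *v u = c *\<^sub>R u"
    by (simp add: M_def c_def matrix_vector_mult_add_rdistrib outer_mulv inner_commute algebra_simps)
  define P :: "real^'n^'n" where "P = (\<chi> i j. if j = k then u$i else (mat 1 :: real^'n^'n)$i$j)"
  define Q :: "real^'n^'n" where "Q = (\<chi> i j. if i = k then (if j = k then c else w$j) else (if i = j then 1 else 0))"
  have m1u: "(mat 1 :: real^'n^'n) *v u = u" by (rule matrix_vector_mul_lid)
  have detP: "det P = u $ k"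
    using m1u cramer_lemma[where A="mat 1 :: real^'n^'n" and k=k and x=u] by (simp only: P_def) simp
  define D :: "real^'n^'n" where "D = (\<chi> i j. if i = j then (if i = k then c else 1) else 0)"
  have detD: "det D = c"
  proof -
    have "det D = prod (\<lambda>i. D$i$i) UNIV" by (rule det_diagonal) (simp add: D_def)
    also have "\<dots> = prod (\<lambda>i. if i = k then c else 1) UNIV" by (simp add: D_def)
    also have "\<dots> = c" by (simp add: prod.delta)
    finally show ?thesis .
  qed
  define x where "x = (\<Sum>j\<in>UNIV - {k}. w$j *s row j D)"
  have xspan: "x \<in> vec.span {row j D |j. j \<noteq> k}"
    unfolding x_def by (force intro: vec.span_sum vec.span_scale vec.span_base)
  have Qeq: "Q = (\<chi> i. if i = k then row k D + x else row i D)"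
  proof -
    have rowD: "\<And>j l. row j D $ l = (if j = l then (if j = k then c else 1) else 0)"
      by (simp add: row_def D_def)
    have xl: "\<And>l. x $ l = (if l = k then 0 else w $ l)"
      by (auto simp: x_def sum_component rowD if_distrib cong: if_cong)
    show ?thesis by (auto simp: vec_eq_iff Q_def xl rowD row_def D_def)
  qed
  have detQ: "det Q = c" using det_row_span[OF xspan] Qeq detD by simp
  have PQe: "(P ** Q)$i$j = u$i * Q$k$j + (if i = j \<and> i \<noteq> k then 1 else 0)" for i j
  proof -
    have "(P ** Q)$i$j = (\<Sum>l\<in>UNIV. P$i$l * Q$l$j)" by (simp add: matrix_matrix_mult_def)
    also have "\<dots> = P$i$k * Q$k$j + (\<Sum>l\<in>UNIV-{k}. P$i$l * Q$l$j)"
      by (simp add: sum.remove[of UNIV k])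
    also have "(\<Sum>l\<in>UNIV-{k}. P$i$l * Q$l$j) = (\<Sum>l\<in>UNIV-{k}. if l = i then (if i = j then 1 else 0) else 0)"
      by (rule sum.cong) (auto simp: P_def Q_def mat_def)
    also have "\<dots> = (if i = j \<and> i \<noteq> k then 1 else 0)"
      by (simp add: sum.delta)
    finally show ?thesis by (simp add: P_def)
  qed
  have PQ: "P ** Q = (\<chi> i j. if j = k then (M *v u)$i else M$i$j)"
  proof -
    have Qk: "Q$k$j = (if j = k then c else w$j)" for j by (simp add: Q_def)
    have Mui: "(M *v u)$i = c * u$i" for i using Mu by simp
    have Mij: "M$i$j = (if i = j then 1 else 0) + u$i * w$j" for i j by (simp add: M_def mat_def outer_def)
    show ?thesis by (auto simp: vec_eq_iff PQe Qk Mui Mij)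
  qed
  have "u $ k * det M = det (P ** Q)"
    using cramer_lemma[where A=M and k=k and x=u] PQ by simp
  also have "\<dots> = u $ k * c" by (simp add: det_mul detP detQ)
  finally show ?thesis using uk by (simp add: M_def c_def)
qed


lemma transpose_add': "transpose ((A::real^'n^'n) + B) = transpose A + transpose B"
  by (simp add: vec_eq_iff transpose_def)

lemma smult_outer: "c *\<^sub>R outer u v = outer (c *\<^sub>R u) v"
  by (simp add: outer_def vec_eq_iff)

definition pd :: "real^'n^'n \<Rightarrow> bool" where
  "pd A \<longleftrightarrow> transpose A = A \<and> (\<forall>x. x \<noteq> 0 \<longrightarrow> 0 < x \<bullet> (A *v x))"

definition good :: "real^'n^'n \<Rightarrow> bool" where
  "good A \<longleftrightarrow> pd A \<and> det A > 0"

lemma psd_cs: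
  fixes M :: "real^'n^'n"
  assumes sym: "transpose M = M" and psd: "\<And>z. 0 \<le> z \<bullet> (M *v z)"
  shows "(x \<bullet> (M *v v))^2 \<le> (x \<bullet> (M *v x)) * (v \<bullet> (M *v v))"
proof -
  define a where "a = x \<bullet> (M *v x)"
  define b where "b = x \<bullet> (M *v v)"
  define s where "s = v \<bullet> (M *v v)"
  have vx: "v \<bullet> (M *v x) = b" unfolding b_def using sym_dot[OF sym] by metis
  have quad: "0 \<le> a + 2 * t * b + t^2 * s" for t
  proof -
    have "0 \<le> (x + t *\<^sub>R v) \<bullet> (M *v (x + t *\<^sub>R v))" by (rule psd)
    also have "\<dots> = a + 2 * t * b + t^2 * s"
      by (simp add: matrix_vector_right_distrib matrix_vector_mult_scaleR inner_add_left inner_add_right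
          a_def s_def vx[unfolded b_def] b_def power2_eq_square algebra_simps)
    finally show ?thesis .
  qed
  have "b^2 \<le> a * s"
  proof (cases "s > 0")
    case True
    have "0 \<le> a + 2 * (-b/s) * b + (-b/s)^2 * s" by (rule quad)
    also have "\<dots> = a - b^2 / s" using True by (simp add: field_simps power2_eq_square)
    finally show ?thesis using True by (simp add: field_simps)
  next
    case False
    have s0: "s = 0" using False psd[of v] s_def by linarith
    have "b = 0"
    proof (rule ccontr)
      assume "b \<noteq> 0"
      have "0 \<le> a + 2 * (-(a+1)/(2*b)) * b + (-(a+1)/(2*b))^2 * s" by (rule quad)
      also have "\<dots> = -1" using \<open>b \<noteq> 0\<close> s0 by (simp add: field_simps)
      finally show False by simp
    qed
    then show ?thesis using s0 by simp
  qed
  then show ?thesis by (simp add: a_def b_def s_def)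
qed

lemma good_det_nz: "good A \<Longrightarrow> det A \<noteq> 0" by (simp add: good_def)

lemma good_inv_sym: "good A \<Longrightarrow> transpose (matrix_inv A) = matrix_inv A"
  by (rule minv_sym) (auto simp: good_def pd_def)

lemma good_inv_psd:
  assumes "good A" shows "0 \<le> z \<bullet> (matrix_inv A *v z)"
proof -
  define y where "y = matrix_inv A *v z"
  have z: "z = A *v y" unfolding y_def using minv_v(1)[OF good_det_nz[OF assms]] by simp
  have "z \<bullet> y = y \<bullet> (A *v y)" by (simp add: z inner_commute)
  also have "\<dots> \<ge> 0" using assms unfolding good_def pd_def by (cases "y = 0") (auto intro: less_imp_le)
  finally show ?thesis by (simp add: y_def)
qed

lemma wn_nonneg: "good A \<Longrightarrow> 0 \<le> wnorm_sq_inv A x"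
  unfolding wnorm_sq_inv_def by (rule good_inv_psd)

lemma good_cs:
  assumes "good A"
  shows "(v \<bullet> (matrix_inv A *v x))^2 \<le> wnorm_sq_inv A x * wnorm_sq_inv A v"
proof -
  have "(v \<bullet> (matrix_inv A *v x))^2 = (x \<bullet> (matrix_inv A *v v))^2"
    using sym_dot[OF good_inv_sym[OF assms]] by metis
  also have "\<dots> \<le> wnorm_sq_inv A x * wnorm_sq_inv A v"
    unfolding wnorm_sq_inv_def by (rule psd_cs[OF good_inv_sym[OF assms] good_inv_psd[OF assms]])
  finally show ?thesis .
qed

lemma rank1_det:
  assumes "good A"
  shows "det (A + c *\<^sub>R outer v v) = det A * (1 + c * wnorm_sq_inv A v)"
proof -
  have nz: "det A \<noteq> 0" using assms by (simp add: good_def)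
  have "A ** (mat 1 + outer (c *\<^sub>R (matrix_inv A *v v)) v) = A + c *\<^sub>R outer v v"
    by (simp add: matrix_add_ldistrib mult_outer matrix_vector_mult_scaleR minv_v[OF nz] smult_outer)
  then have "det (A + c *\<^sub>R outer v v) = det A * det (mat 1 + outer (c *\<^sub>R (matrix_inv A *v v)) v)"
    by (metis det_mul)
  also have "\<dots> = det A * (1 + c * wnorm_sq_inv A v)"
    by (simp add: det_I_outer wnorm_sq_inv_def inner_commute)
  finally show ?thesis .
qed

lemma rank1_good:
  assumes "good A" "c \<ge> 0"
  shows "good (A + c *\<^sub>R outer v v)"
proof -
  have "det (A + c *\<^sub>R outer v v) > 0"
    using rank1_det[OF assms(1)] wn_nonneg[OF assms(1), of v] assms
    by (simp add: good_def add_pos_nonneg)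
  moreover have "transpose (A + c *\<^sub>R outer v v) = A + c *\<^sub>R outer v v"
    using assms(1) by (simp add: transpose_add' transpose_scalar transpose_outer good_def pd_def)
  moreover have "0 < x \<bullet> ((A + c *\<^sub>R outer v v) *v x)" if "x \<noteq> 0" for x
  proof -
    have "0 < x \<bullet> (A *v x)" using assms(1) that by (simp add: good_def pd_def)
    moreover have "0 \<le> c * (v \<bullet> x)^2" using assms(2) by simp
    ultimately show ?thesis
      by (simp add: matrix_vector_mult_add_rdistrib inner_add_right dot_outer scaleR_matrix_vector_assoc[symmetric])
  qed
  ultimately show ?thesis by (simp add: good_def pd_def)
qed

lemma rank1_wn:
  assumes "good A" "c \<ge> 0"
  shows "wnorm_sq_inv (A + c *\<^sub>R outer v v) x
           = wnorm_sq_inv A x - c * (v \<bullet> (matrix_inv A *v x))^2 / (1 + c * wnorm_sq_inv A v)"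
proof -
  define B where "B = A + c *\<^sub>R outer v v"
  have gB: "good B" unfolding B_def by (rule rank1_good[OF assms])
  have nzA: "det A \<noteq> 0" and nzB: "det B \<noteq> 0" using assms(1) gB by (simp_all add: good_def)
  define y where "y = matrix_inv B *v x"
  define a where "a = wnorm_sq_inv A x"
  define b where "b = v \<bullet> (matrix_inv A *v x)"
  define s where "s = wnorm_sq_inv A v"
  have s0: "0 \<le> s" unfolding s_def by (rule wn_nonneg[OF assms(1)])
  have "B *v y = x" unfolding y_def by (rule minv_v(1)[OF nzB])
  then have "A *v y + (c * (v \<bullet> y)) *\<^sub>R v = x"
    by (simp add: B_def matrix_vector_mult_add_rdistrib outer_mulv scaleR_matrix_vector_assoc[symmetric])
  then have "matrix_inv A *v (A *v y + (c * (v \<bullet> y)) *\<^sub>R v) = matrix_inv A *v x" by simp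
  then have yeq: "y = matrix_inv A *v x - (c * (v \<bullet> y)) *\<^sub>R (matrix_inv A *v v)"
    by (simp add: matrix_vector_right_distrib matrix_vector_mult_scaleR minv_v(2)[OF nzA] algebra_simps)
  have "v \<bullet> y = b - c * (v \<bullet> y) * s"
    by (subst yeq) (simp add: b_def s_def wnorm_sq_inv_def inner_diff_right)
  moreover have "0 < 1 + c * s" using s0 assms(2) by (simp add: add_pos_nonneg)
  ultimately have vy: "v \<bullet> y = b / (1 + c * s)"
    by (simp add: field_simps)
  have xAv: "x \<bullet> (matrix_inv A *v v) = b"
    unfolding b_def using sym_dot[OF good_inv_sym[OF assms(1)]] by metis
  have "x \<bullet> y = a - c * (v \<bullet> y) * b"
    by (subst yeq) (simp add: a_def wnorm_sq_inv_def inner_diff_right xAv)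
  also have "\<dots> = a - c * b^2 / (1 + c * s)" by (simp add: vy power2_eq_square)
  finally show ?thesis by (simp add: wnorm_sq_inv_def y_def B_def a_def b_def s_def)
qed

lemma rank1_wn_le:
  assumes "good A" "c \<ge> 0"
  shows "wnorm_sq_inv (A + c *\<^sub>R outer v v) x \<le> wnorm_sq_inv A x"
  using rank1_wn[OF assms, of v x] wn_nonneg[OF assms(1), of v] assms(2)
  by (simp add: divide_nonneg_pos add_pos_nonneg)

lemma rank1_ratio:
  assumes "good A" "c \<ge> 0"
  shows "wnorm_sq_inv A x \<le> (1 + c * wnorm_sq_inv A v) * wnorm_sq_inv (A + c *\<^sub>R outer v v) x"
proof -
  define a where "a = wnorm_sq_inv A x"
  define b where "b = v \<bullet> (matrix_inv A *v x)"
  define s where "s = wnorm_sq_inv A v"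
  have s0: "0 \<le> s" unfolding s_def by (rule wn_nonneg[OF assms(1)])
  have cs: "b^2 \<le> a * s" unfolding a_def b_def s_def by (rule good_cs[OF assms(1)])
  have pos: "0 < 1 + c * s" using s0 assms(2) by (simp add: add_pos_nonneg)
  have "(1 + c * s) * (a - c * b^2 / (1 + c * s)) = a + c * (a * s - b^2)"
    using pos by (simp add: field_simps)
  also have "\<dots> \<ge> a" using cs assms(2) by simp
  finally show ?thesis using rank1_wn[OF assms, of v x] by (simp add: a_def b_def s_def)
qed


inductive upd :: "real^'n^'n \<Rightarrow> real^'n^'n \<Rightarrow> bool" for A where
  upd_refl: "upd A A"
| upd_step: "upd A B \<Longrightarrow> c \<ge> 0 \<Longrightarrow> upd A (B + c *\<^sub>R outer v v)"

lemma upd_good: "upd A B \<Longrightarrow> good A \<Longrightarrow> good B"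
  by (induction rule: upd.induct) (auto intro: rank1_good)

lemma upd_det: "upd A B \<Longrightarrow> good A \<Longrightarrow> det A \<le> det B"
proof (induction rule: upd.induct)
  case upd_refl then show ?case by simp
next
  case (upd_step B c v)
  have gB: "good B" using upd_good upd_step by blast
  have "det B \<le> det B * (1 + c * wnorm_sq_inv B v)"
    using wn_nonneg[OF gB, of v] upd_step(2) gB by (simp add: good_def)
  then show ?case using upd_step rank1_det[OF gB, of c v] by simp
qed

lemma upd_wn_le: "upd A B \<Longrightarrow> good A \<Longrightarrow> wnorm_sq_inv B x \<le> wnorm_sq_inv A x"
proof (induction rule: upd.induct)
  case upd_refl then show ?case by simp
next
  case (upd_step B c v)
  have gB: "good B" using upd_good upd_step by blast
  show ?case using rank1_wn_le[OF gB upd_step(2), of v x] upd_step by simp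
qed

lemma upd_ratio: "upd A B \<Longrightarrow> good A \<Longrightarrow> wnorm_sq_inv A x \<le> det B / det A * wnorm_sq_inv B x"
proof (induction rule: upd.induct)
  case upd_refl then show ?case using good_det_nz[of A] by simp
next
  case (upd_step B c v)
  have gB: "good B" using upd_good upd_step by blast
  have dA: "det A > 0" "det B > 0" using upd_step gB by (auto simp: good_def)
  have "wnorm_sq_inv A x \<le> det B / det A * wnorm_sq_inv B x" using upd_step by simp
  also have "\<dots> \<le> det B / det A * ((1 + c * wnorm_sq_inv B v) * wnorm_sq_inv (B + c *\<^sub>R outer v v) x)"
    using rank1_ratio[OF gB upd_step(2), of x v] dA by (intro mult_left_mono) auto
  also have "\<dots> = det (B + c *\<^sub>R outer v v) / det A * wnorm_sq_inv (B + c *\<^sub>R outer v v) x"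
    by (simp add: rank1_det[OF gB])
  finally show ?case .
qed

lemma upd_trans: "upd B C \<Longrightarrow> upd A B \<Longrightarrow> upd A C"
  by (induction rule: upd.induct) (auto intro: upd_step)

lemma upd_sum:
  assumes "finite F" "\<And>i. i \<in> F \<Longrightarrow> c i \<ge> 0"
  shows "upd A (A + (\<Sum>i\<in>F. c i *\<^sub>R outer (v i) (v i)))"
  using assms
proof (induction F rule: finite_induct)
  case empty then show ?case by (simp add: upd_refl)
next
  case (insert j F)
  have "upd A (A + (\<Sum>i\<in>F. c i *\<^sub>R outer (v i) (v i)) + c j *\<^sub>R outer (v j) (v j))"
    using insert by (intro upd_step) auto
  then show ?case using insert by (simp add: add_ac)
qed

lemma outer_mult_left: "outer u v ** (M::real^'n^'n) = outer u (transpose M *v v)"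
  by (simp add: outer_def vec_eq_iff matrix_matrix_mult_def matrix_vector_mult_def transpose_def
      sum_distrib_left mult.left_commute mult.commute)

lemma matrix_add_rdistrib': "((A::real^'n^'n) + B) ** C = A ** C + B ** C"
  by (simp add: vec_eq_iff matrix_matrix_mult_def distrib_right sum.distrib)

lemma outer_add_left: "outer (x + y) w = outer x w + outer y w"
  by (simp add: outer_def vec_eq_iff distrib_right)

lemma transpose_outer_gen: "transpose (outer u v) = outer v u"
  by (simp add: outer_def vec_eq_iff transpose_def)

lemma axis_dot_mat: "axis i 1 \<bullet> ((M::real^'n^'n) *v axis j 1) = M$i$j"
proof -
  have "axis i 1 \<bullet> (M *v axis j 1) = (M *v axis j 1) $ i" by (simp add: inner_commute[of "axis i 1"] inner_axis)
  also have "\<dots> = (\<Sum>l\<in>UNIV. M$i$l * (if l = j then 1 else 0))" by (simp add: matrix_vector_mult_def axis_def)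
  also have "\<dots> = M$i$j" by (simp add: if_distrib[of "\<lambda>x. M$i$_ * x"] cong: if_cong)
  finally show ?thesis .
qed

lemma hadamard_aux:
  fixes J :: "'n::finite set"
  shows "\<And>B::real^'n^'n. transpose B = B \<Longrightarrow> (\<And>z. 0 \<le> z \<bullet> (B *v z)) \<Longrightarrow>
     (\<And>i j. i \<notin> J \<or> j \<notin> J \<Longrightarrow> B$i$j = (if i = j then 1 else 0)) \<Longrightarrow>
     det B \<le> (\<Prod>i\<in>J. B$i$i)"
  using finite[of J]
proof (induction J rule: finite_induct)
  case empty
  then have "B = mat 1" by (simp add: vec_eq_iff mat_def)
  then show ?case by simp
next
  case (insert k J)
  fix B :: "real^'n^'n"
  assume sym: "transpose B = B" and psd: "\<And>z. 0 \<le> z \<bullet> (B *v z)"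
    and outside: "\<And>i j. i \<notin> insert k J \<or> j \<notin> insert k J \<Longrightarrow> B$i$j = (if i = j then 1 else 0)"
  have diag: "0 \<le> B$i$i" for i using psd[of "axis i 1"] axis_dot_mat by metis
  have Bsym: "B$i$j = B$j$i" for i j using sym by (metis transpose_def vec_lambda_beta)
  have cs: "(B$i$j)^2 \<le> B$i$i * B$j$j" for i j
    using psd_cs[OF sym psd, of "axis i 1" "axis j 1"] by (simp add: axis_dot_mat)
  define a where "a = B$k$k"
  show "det B \<le> (\<Prod>i\<in>insert k J. B$i$i)"
  proof (cases "a = 0")
    case True
    have "B$k$j = 0" for j using cs[of k j] True by (simp add: a_def)
    then have "row k B = 0" by (simp add: row_def vec_eq_iff)
    then have "det B = 0" by (rule det_zero_row)
    then show ?thesis using diag by (simp add: prod_nonneg)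
  next
    case False
    then have apos: "a > 0" using diag[of k] a_def by simp
    have akk: "B$k$k = a" by (simp add: a_def)
    have anz: "a \<noteq> 0" using apos by simp
    define e :: "real^'n" where "e = axis k 1"
    define b where "b = B *v e"
    have bi: "b$i = B$i$k" for i by (simp add: b_def e_def matrix_vector_mult_def axis_def if_distrib cong: if_cong)
    define B' where "B' = B - (1/a) *\<^sub>R outer b b"
    define C where "C = B' + outer e e"
    define B3 where "B3 = B' + a *\<^sub>R outer e e"
    define w where "w = (1/a) *\<^sub>R b - e"
    define L where "L = mat 1 + outer w e"
    have ei: "e$i = (if i = k then 1 else 0)" for i by (simp add: e_def axis_def)
    have Cij: "C$i$j = B$i$j - B$i$k * B$j$k / a + (if i = k \<and> j = k then 1 else 0)" for i j
      by (simp add: C_def B'_def outer_def bi ei)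
    have B3ij: "B3$i$j = B$i$j - B$i$k * B$j$k / a + (if i = k \<and> j = k then a else 0)" for i j
      by (simp add: B3_def B'_def outer_def bi ei)
    have detL: "det L = 1"
      using apos by (simp add: L_def det_I_outer w_def inner_diff_left e_def inner_axis bi a_def)
    have B3e: "B3 *v e = a *\<^sub>R e"
    proof -
      have "(B3 *v e)$i = (\<Sum>l\<in>UNIV. B3$i$l * (if l = k then 1 else 0))" for i
        by (simp add: matrix_vector_mult_def ei)
      also have "\<dots> i = B3$i$k" for i by (simp add: if_distrib[of "\<lambda>x. B3$i$_ * x"] cong: if_cong)
      finally show ?thesis using apos by (auto simp: vec_eq_iff B3ij ei a_def)
    qed
    have B3t: "transpose B3 = B3"
      by (simp add: vec_eq_iff transpose_def B3ij Bsym mult.commute conj_commute)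
    have ee: "e \<bullet> e = 1" by (simp add: e_def)
    have "L ** B3 ** transpose L = B3 + outer w (a *\<^sub>R e) + outer (a *\<^sub>R e) w + a *\<^sub>R outer w w"
      by (simp add: L_def transpose_add' transpose_outer_gen matrix_add_ldistrib matrix_add_rdistrib'
          outer_mult_left mult_outer B3e B3t outer_mulv ee smult_outer add_ac
          matrix_vector_mult_add_rdistrib outer_add_left)
    also have "\<dots> = B"
    proof -
      have wi: "w$i = B$i$k / a - (if i = k then 1 else 0)" for i by (simp add: w_def bi ei)
      have "(B3 + outer w (a *\<^sub>R e) + outer (a *\<^sub>R e) w + a *\<^sub>R outer w w)$i$j = B$i$j" for i j
      proof -
        have "(B3 + outer w (a *\<^sub>R e) + outer (a *\<^sub>R e) w + a *\<^sub>R outer w w)$i$j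
           = B3$i$j + w$i * (a * e$j) + a * e$i * w$j + a * (w$i * w$j)"
          by (simp add: outer_def)
        also have "\<dots> = B$i$j"
          unfolding B3ij wi ei using anz
          by (cases "i = k"; cases "j = k") (simp_all add: akk Bsym[of k j] Bsym[of k i] field_simps power2_eq_square)
        finally show ?thesis .
      qed
      then show ?thesis by (simp add: vec_eq_iff)
    qed
    finally have LBL: "L ** B3 ** transpose L = B" .
    have detB3: "det B3 = a * det C"
    proof -
      have "B3$i$l = (if i = k then a * C$k$l else C$i$l)" for i l
        unfolding B3ij Cij using anz
        by (cases "i = k"; cases "l = k") (simp_all add: akk Bsym[of k l] field_simps)
      then have B3r: "B3 = (\<chi> i. if i = k then a *s row i C else row i C)"
        by (simp add: vec_eq_iff row_def)
      have r: "(\<chi> i. row i C) = C" by (simp add: vec_eq_iff row_def)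
      show ?thesis
        using det_row_mul[where k=k and c=a and a="\<lambda>i. row i C" and b="\<lambda>i. row i C"]
        unfolding B3r[symmetric] by (simp add: r)
    qed
    have detB: "det B = a * det C"
      using LBL detL detB3 by (metis det_mul det_transpose mult_1 mult.commute)
    have Csym: "transpose C = C"
      by (simp add: vec_eq_iff transpose_def Cij Bsym mult.commute conj_commute)
    have Cpsd: "0 \<le> z \<bullet> (C *v z)" for z
    proof -
      have "(z \<bullet> (B *v e))^2 \<le> (z \<bullet> (B *v z)) * (e \<bullet> (B *v e))" by (rule psd_cs[OF sym psd])
      moreover have "e \<bullet> (B *v e) = a" by (simp add: e_def axis_dot_mat a_def)
      ultimately have "(b \<bullet> z)^2 / a \<le> z \<bullet> (B *v z)"
        using apos by (simp add: b_def inner_commute divide_le_eq mult.commute)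
      moreover have "z \<bullet> (C *v z) = z \<bullet> (B *v z) - (b \<bullet> z)^2 / a + (e \<bullet> z)^2"
        by (simp add: C_def B'_def matrix_vector_mult_add_rdistrib matrix_vector_mult_diff_rdistrib
            inner_add_right inner_diff_right dot_outer scaleR_matrix_vector_assoc[symmetric])
      ultimately show ?thesis by simp
    qed
    have Cout: "C$i$j = (if i = j then 1 else 0)" if "i \<notin> J \<or> j \<notin> J" for i j
    proof (cases "i = k \<or> j = k")
      case True
      then show ?thesis using apos by (auto simp: Cij a_def Bsym)
    next
      case False
      then have "i \<notin> insert k J \<or> j \<notin> insert k J" using that by auto
      then have "B$i$j = (if i = j then 1 else 0)" "B$i$k = 0 \<or> B$j$k = 0"
        using outside False by auto
      then show ?thesis using False by (auto simp: Cij)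
    qed
    have IH: "det C \<le> (\<Prod>i\<in>J. C$i$i)" by (rule insert.IH[OF Csym Cpsd Cout]) 
    have Cdiag: "0 \<le> C$i$i \<and> C$i$i \<le> B$i$i" if "i \<in> J" for i
    proof -
      have "i \<noteq> k" using that insert by auto
      then have ci: "C$i$i = B$i$i - (B$i$k)^2 / a" by (simp add: Cij power2_eq_square)
      have "(B$i$k)^2 \<le> B$i$i * a" using cs[of i k] by (simp add: a_def)
      then have "(B$i$k)^2 / a \<le> B$i$i" using apos by (simp add: divide_le_eq mult.commute)
      then show ?thesis using ci apos by simp
    qed
    have "det B \<le> a * (\<Prod>i\<in>J. C$i$i)" using detB IH apos by simp
    also have "\<dots> \<le> a * (\<Prod>i\<in>J. B$i$i)"
      using Cdiag apos by (intro mult_left_mono prod_mono) auto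
    also have "\<dots> = (\<Prod>i\<in>insert k J. B$i$i)" using insert by (simp add: a_def)
    finally show ?thesis .
  qed
qed

lemma hadamard:
  fixes B :: "real^'n^'n"
  assumes "transpose B = B" "\<And>z. 0 \<le> z \<bullet> (B *v z)"
  shows "det B \<le> (\<Prod>i\<in>UNIV. B$i$i)"
  by (rule hadamard_aux[OF assms]) auto

lemma good_psd: "good B \<Longrightarrow> 0 \<le> z \<bullet> (B *v z)"
  unfolding good_def pd_def by (cases "z = 0") (auto intro: less_imp_le)

lemma det_le_trace:
  fixes B :: "real^'n^'n"
  assumes g: "good B"
  shows "det B \<le> (trace B / CARD('n))^CARD('n)"
proof -
  have sym: "transpose B = B" using g by (simp add: good_def pd_def)
  have diag: "0 \<le> B$i$i" for i using good_psd[OF g, of "axis i 1"] axis_dot_mat by metis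
  have h: "det B \<le> (\<Prod>i\<in>UNIV. B$i$i)" by (rule hadamard[OF sym good_psd[OF g]])
  define P where "P = (\<Prod>i\<in>UNIV. B$i$i)"
  have P0: "0 \<le> P" unfolding P_def using diag by (simp add: prod_nonneg)
  have am: "P powr (1 / CARD('n)) \<le> (\<Sum>i\<in>UNIV. B$i$i / CARD('n))"
    unfolding P_def by (rule arith_geom_mean) (auto simp: diag)
  have "(\<Sum>i\<in>UNIV. B$i$i / CARD('n)) = trace B / CARD('n)"
    by (simp add: trace_def sum_divide_distrib)
  with am have am2: "P powr (1 / CARD('n)) \<le> trace B / CARD('n)" by simp
  have "P \<le> (trace B / CARD('n))^CARD('n)"
  proof (cases "P = 0")
    case True
    have "0 \<le> trace B / CARD('n)" using am2 by (smt (verit) powr_ge_zero)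
    then show ?thesis using True by simp
  next
    case False
    have "P = (P powr (1 / CARD('n)))^CARD('n)"
      using False P0 by (simp add: powr_power)
    also have "\<dots> \<le> (trace B / CARD('n))^CARD('n)"
      by (rule power_mono[OF am2]) simp
    finally show ?thesis .
  qed
  then show ?thesis using h P_def by simp
qed

lemma mat_scal: "(mat lam :: real^'n^'n) = lam *\<^sub>R mat 1"
  by (simp add: vec_eq_iff mat_def)

lemma mat_mv: "(mat lam :: real^'n^'n) *v x = lam *\<^sub>R x"
  by (subst mat_scal) (simp add: scaleR_matrix_vector_assoc[symmetric] matrix_vector_mul_lid)

lemma good_mat:
  assumes "(lam::real) > 0"
  shows "good (mat lam :: real^'n^'n)"
    and "det (mat lam :: real^'n^'n) = lam ^ CARD('n)"
    and "wnorm_sq_inv (mat lam :: real^'n^'n) x = (x \<bullet> x) / lam"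
proof -
  have d: "det (mat lam :: real^'n^'n) = lam ^ CARD('n)"
    by (subst det_diagonal) (auto simp: mat_def)
  show "det (mat lam :: real^'n^'n) = lam ^ CARD('n)" by (rule d)
  show g: "good (mat lam :: real^'n^'n)"
  proof -
    have "0 < x \<bullet> ((mat lam :: real^'n^'n) *v x)" if "x \<noteq> 0" for x
      using assms that by (simp add: mat_mv)
    then show ?thesis using assms d by (simp add: good_def pd_def)
  qed
  have nz: "det (mat lam :: real^'n^'n) \<noteq> 0" using assms d by simp
  define y where "y = matrix_inv (mat lam :: real^'n^'n) *v x"
  have "(mat lam :: real^'n^'n) *v y = x" unfolding y_def by (rule minv_v(1)[OF nz])
  then have "y = (1/lam) *\<^sub>R x" using assms by (auto simp: mat_mv)
  then show "wnorm_sq_inv (mat lam :: real^'n^'n) x = (x \<bullet> x) / lam"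
    by (simp add: wnorm_sq_inv_def y_def[symmetric] divide_inverse mult.commute)
qed

lemma prob_pos:
  assumes "finite S" "s \<in> S"
  shows "0 < mnl_prob phi S th s"
  unfolding mnl_prob_def using assms by (intro divide_pos_pos sum_pos) auto

lemma prob_sum:
  assumes "finite S" "S \<noteq> {}"
  shows "(\<Sum>s\<in>S. mnl_prob phi S th s) = 1"
proof -
  have "0 < (\<Sum>s''\<in>S. exp (phi s'' \<bullet> th))" using assms by (intro sum_pos) auto
  then show ?thesis unfolding mnl_prob_def by (simp add: sum_divide_distrib[symmetric])
qed

lemma pair_sum:
  fixes p f g :: "'s \<Rightarrow> real"
  assumes "finite S" "(\<Sum>i\<in>S. p i) = 1"
  shows "(\<Sum>i\<in>S. \<Sum>j\<in>S. p i * p j / 2 * ((f i - f j) * (g i - g j)))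
         = (\<Sum>i\<in>S. p i * f i * g i) - (\<Sum>i\<in>S. p i * f i) * (\<Sum>i\<in>S. p i * g i)"
proof -
  define F where "F = (\<Sum>i\<in>S. p i * f i)"
  define G where "G = (\<Sum>i\<in>S. p i * g i)"
  define H where "H = (\<Sum>i\<in>S. p i * f i * g i)"
  have inner: "(\<Sum>j\<in>S. p i * p j / 2 * ((f i - f j) * (g i - g j)))
      = p i / 2 * (f i * g i - f i * G - g i * F + H)" for i
  proof -
    have "(\<Sum>j\<in>S. p i * p j / 2 * ((f i - f j) * (g i - g j)))
       = (\<Sum>j\<in>S. p i / 2 * (f i * g i * p j - f i * (p j * g j) - g i * (p j * f j) + p j * f j * g j))"
      by (rule sum.cong) (auto simp: algebra_simps)
    also have "\<dots> = p i / 2 * (\<Sum>j\<in>S. f i * g i * p j - f i * (p j * g j) - g i * (p j * f j) + p j * f j * g j)"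
      by (simp only: sum_distrib_left)
    also have "(\<Sum>j\<in>S. f i * g i * p j - f i * (p j * g j) - g i * (p j * f j) + p j * f j * g j)
        = f i * g i * (\<Sum>j\<in>S. p j) - f i * G - g i * F + H"
      by (simp only: F_def G_def H_def sum.distrib sum_subtractf sum_distrib_left)
    finally show ?thesis using assms(2) by simp
  qed
  have "(\<Sum>i\<in>S. \<Sum>j\<in>S. p i * p j / 2 * ((f i - f j) * (g i - g j)))
      = (\<Sum>i\<in>S. 1/2 * (p i * f i * g i) - 1/2 * G * (p i * f i) - 1/2 * F * (p i * g i) + 1/2 * H * p i)"
    unfolding inner by (rule sum.cong) (auto simp: algebra_simps)
  also have "\<dots> = 1/2 * H - 1/2 * G * F - 1/2 * F * G + 1/2 * H * (\<Sum>i\<in>S. p i)"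
    by (simp only: sum.distrib sum_subtractf sum_distrib_left[symmetric] F_def[symmetric] G_def[symmetric] H_def[symmetric])
  also have "\<dots> = H - F * G" using assms(2) by simp
  finally show ?thesis by (simp add: F_def G_def H_def)
qed

lemma hess_decomp:
  assumes "finite S" "S \<noteq> {}"
  shows "mnl_hess phi S th = (\<Sum>m\<in>S \<times> S. (mnl_prob phi S th (fst m) * mnl_prob phi S th (snd m) / 2)
            *\<^sub>R outer (phi (fst m) - phi (snd m)) (phi (fst m) - phi (snd m)))"
proof -
  define p where "p = mnl_prob phi S th"
  have ps: "(\<Sum>i\<in>S. p i) = 1" unfolding p_def by (rule prob_sum[OF assms])
  have "(mnl_hess phi S th)$a$b = (\<Sum>m\<in>S \<times> S. (p (fst m) * p (snd m) / 2)
            *\<^sub>R outer (phi (fst m) - phi (snd m)) (phi (fst m) - phi (snd m)))$a$b" for a b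
  proof -
    have "(\<Sum>m\<in>S \<times> S. (p (fst m) * p (snd m) / 2)
            *\<^sub>R outer (phi (fst m) - phi (snd m)) (phi (fst m) - phi (snd m)))$a$b
        = (\<Sum>m\<in>S \<times> S. p (fst m) * p (snd m) / 2 * ((phi (fst m)$a - phi (snd m)$a) * (phi (fst m)$b - phi (snd m)$b)))"
      by (simp add: sum_component outer_def)
    also have "\<dots> = (\<Sum>i\<in>S. \<Sum>j\<in>S. p i * p j / 2 * ((phi i$a - phi j$a) * (phi i$b - phi j$b)))"
      by (simp add: sum.cartesian_product split_def)
    also have "\<dots> = (\<Sum>i\<in>S. p i * phi i$a * phi i$b) - (\<Sum>i\<in>S. p i * phi i$a) * (\<Sum>i\<in>S. p i * phi i$b)"
      by (rule pair_sum[OF assms(1) ps])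
    also have "\<dots> = (mnl_hess phi S th)$a$b"
      by (simp add: mnl_hess_def Let_def sum_component outer_def p_def mult.assoc)
    finally show ?thesis by (simp add: p_def)
  qed
  then show ?thesis by (simp add: vec_eq_iff p_def)
qed

lemma trace_sum: "trace (\<Sum>m\<in>F. f m :: real^'n^'n) = (\<Sum>m\<in>F. trace (f m))"
  by (simp add: trace_def sum_component sum.swap[of _ UNIV F])

lemma trace_outer: "trace (outer x x) = x \<bullet> x"
  by (simp add: trace_def outer_def inner_vec_def)

lemma trace_scale: "trace (c *\<^sub>R (M::real^'n^'n)) = c * trace M"
  by (simp add: trace_def sum_distrib_left)

lemma hess_trace:
  assumes "finite S" "S \<noteq> {}" "\<And>s. s \<in> S \<Longrightarrow> norm (phi s) \<le> L"
  shows "trace (mnl_hess phi S th) \<le> L^2"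
proof -
  define p where "p = mnl_prob phi S th"
  define m where "m = (\<Sum>s'\<in>S. p s' *\<^sub>R phi s')"
  have "trace (mnl_hess phi S th) = (\<Sum>s\<in>S. p s * (phi s \<bullet> phi s)) - m \<bullet> m"
    by (simp add: mnl_hess_def Let_def p_def[symmetric] m_def[symmetric] trace_sub trace_sum trace_scale trace_outer)
  also have "\<dots> \<le> (\<Sum>s\<in>S. p s * L^2)"
  proof -
    have "(\<Sum>s\<in>S. p s * (phi s \<bullet> phi s)) \<le> (\<Sum>s\<in>S. p s * L^2)"
    proof (rule sum_mono)
      fix s assume s: "s \<in> S"
      have "phi s \<bullet> phi s = (norm (phi s))^2" by (simp add: power2_norm_eq_inner)
      also have "\<dots> \<le> L^2" using assms(3)[OF s] by (simp add: power_mono)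
      finally show "p s * (phi s \<bullet> phi s) \<le> p s * L^2"
        using prob_pos[OF assms(1) s, of phi th] by (intro mult_left_mono) (auto simp: p_def)
    qed
    then show ?thesis using inner_ge_zero[of m] by linarith
  qed
  also have "\<dots> = L^2" using prob_sum[OF assms(1,2), of phi th] by (simp add: p_def sum_distrib_right[symmetric])
  finally show ?thesis .
qed

lemma outer_neg: "outer (- x) (- x) = outer x x"
  by (simp add: outer_def vec_eq_iff)

lemma hess_step:
  fixes A :: "real^'n^'n"
  assumes g: "good A" and fin: "finite S" and ne: "S \<noteq> {}" and s0: "s0 \<in> S" "phi s0 = 0"
    and j: "j \<in> S" and kap: "\<kappa> \<le> mnl_prob phi S th s0 * mnl_prob phi S th j"
  shows "upd A (A + mnl_hess phi S th)"
    and "det A * (1 + \<kappa> * wnorm_sq_inv A (phi j)) \<le> det (A + mnl_hess phi S th)"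
proof -
  define p where "p = mnl_prob phi S th"
  define c where "c = (\<lambda>m. p (fst m) * p (snd m) / 2)"
  define v where "v = (\<lambda>m. phi (fst m) - phi (snd m))"
  have H: "mnl_hess phi S th = (\<Sum>m\<in>S \<times> S. c m *\<^sub>R outer (v m) (v m))"
    unfolding hess_decomp[OF fin ne] c_def v_def p_def ..
  have c0: "m \<in> S \<times> S \<Longrightarrow> 0 \<le> c m" for m
    using prob_pos[OF fin, of _ phi th] by (auto simp: c_def p_def less_imp_le)
  show "upd A (A + mnl_hess phi S th)" unfolding H by (rule upd_sum) (use fin c0 in auto)
  show "det A * (1 + \<kappa> * wnorm_sq_inv A (phi j)) \<le> det (A + mnl_hess phi S th)"
  proof (cases "j = s0")
    case True
    have "wnorm_sq_inv A (phi j) = 0" using True s0 by (simp add: wnorm_sq_inv_def)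
    then show ?thesis using upd_det[OF \<open>upd A (A + mnl_hess phi S th)\<close> g] by simp
  next
    case False
    define m1 where "m1 = (s0, j)"
    define m2 where "m2 = (j, s0)"
    define x where "x = phi j"
    have m12: "m1 \<in> S \<times> S" "m2 \<in> S \<times> S - {m1}" using s0 j False by (auto simp: m1_def m2_def)
    have o1: "outer (v m1) (v m1) = outer x x" by (simp add: v_def m1_def x_def s0 outer_neg)
    have o2: "outer (v m2) (v m2) = outer x x" by (simp add: v_def m2_def x_def s0)
    define A' where "A' = A + (p s0 * p j) *\<^sub>R outer x x"
    define R where "R = S \<times> S - {m1} - {m2}"
    have "(\<Sum>m\<in>S \<times> S. c m *\<^sub>R outer (v m) (v m))
        = c m1 *\<^sub>R outer (v m1) (v m1) + (c m2 *\<^sub>R outer (v m2) (v m2) + (\<Sum>m\<in>R. c m *\<^sub>R outer (v m) (v m)))"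
      using m12 fin by (simp add: sum.remove[of "S \<times> S" m1] sum.remove[of "S \<times> S - {m1}" m2] R_def)
    also have "c m1 *\<^sub>R outer (v m1) (v m1) + c m2 *\<^sub>R outer (v m2) (v m2) = (p s0 * p j) *\<^sub>R outer x x"
      unfolding o1 o2 by (simp add: c_def m1_def m2_def scaleR_add_left[symmetric] mult.commute)
    ultimately have eq: "A + mnl_hess phi S th = A' + (\<Sum>m\<in>R. c m *\<^sub>R outer (v m) (v m))"
      unfolding H A'_def by (simp add: add_ac)
    have pp: "0 \<le> p s0 * p j" using prob_pos[OF fin s0(1), of phi th] prob_pos[OF fin j, of phi th] by (simp add: p_def)
    have gA': "good A'" unfolding A'_def by (rule rank1_good[OF g pp])
    have "upd A' (A' + (\<Sum>m\<in>R. c m *\<^sub>R outer (v m) (v m)))"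
      by (rule upd_sum) (use fin c0 in \<open>auto simp: R_def\<close>)
    then have "det A' \<le> det (A + mnl_hess phi S th)" unfolding eq by (rule upd_det[OF _ gA'])
    moreover have "det A' = det A * (1 + p s0 * p j * wnorm_sq_inv A x)"
      unfolding A'_def by (rule rank1_det[OF g])
    moreover have "det A * (1 + \<kappa> * wnorm_sq_inv A x) \<le> det A * (1 + p s0 * p j * wnorm_sq_inv A x)"
      using kap wn_nonneg[OF g, of x] g by (intro mult_left_mono) (auto simp: p_def good_def intro: mult_right_mono)
    ultimately show ?thesis by (simp add: x_def)
  qed
qed

lemma ln_one_plus_half:
  fixes u :: real
  assumes "0 \<le> u" "u \<le> 1"
  shows "u / 2 \<le> ln (1 + u)"
proof -
  have "ln (1 / (1 + u)) \<le> 1 / (1 + u) - 1" using assms by (intro ln_le_minus_one) auto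
  then have "u / (1 + u) \<le> ln (1 + u)" using assms by (simp add: ln_div field_simps)
  moreover have "u / 2 \<le> u / (1 + u)" using assms by (intro divide_left_mono) auto
  ultimately show ?thesis by linarith
qed

lemma good_diag_pos: "good A \<Longrightarrow> 0 < A$i$i"
proof -
  assume "good A"
  moreover have "axis i (1::real) \<noteq> 0" by (simp add: axis_def vec_eq_iff)
  ultimately show ?thesis unfolding good_def pd_def using axis_dot_mat[of i A i] by metis
qed

lemma good_trace_pos: "good (A::real^'n^'n) \<Longrightarrow> 0 < trace A"
  unfolding trace_def by (intro sum_pos) (auto intro: good_diag_pos)

lemma trace_mat: "trace (mat (lam::real) :: real^'n^'n) = real CARD('n) * lam"
  by (simp add: trace_def mat_def)

theorem lemma20:
  fixes \<phi> :: "'s::finite \<Rightarrow> 'a::finite \<Rightarrow> 's \<Rightarrow> real^'d"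
    and Ssa :: "'s \<Rightarrow> 'a \<Rightarrow> 's set"
    and L\<phi> L\<theta> \<kappa> lam :: real
    and \<theta>star :: "real^'d"
    and st :: "nat \<Rightarrow> 's" and act :: "nat \<Rightarrow> 'a"
    and \<theta>hat :: "nat \<Rightarrow> real^'d"
    and \<Sigma> :: "nat \<Rightarrow> real^'d^'d"
    and \<beta> :: "nat \<Rightarrow> real"
    and T K :: nat and tk :: "nat \<Rightarrow> nat"
  assumes Ssa_fin: "\<And>s a. finite (Ssa s a)"
    and A1_phi: "\<And>s a s'. norm (\<phi> s a s') \<le> L\<phi>"
    and A1_theta: "norm \<theta>star \<le> L\<theta>"
    and kappa: "0 < \<kappa>" "\<kappa> < 1"
    and A2: "\<And>t \<theta> s' s''. t \<ge> 1 \<Longrightarrow> \<theta> \<in> cball 0 L\<theta> \<Longrightarrow>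
               s' \<in> Ssa (st t) (act t) \<Longrightarrow> s'' \<in> Ssa (st t) (act t) \<Longrightarrow>
               mnl_prob (\<phi> (st t) (act t)) (Ssa (st t) (act t)) \<theta> s' *
               mnl_prob (\<phi> (st t) (act t)) (Ssa (st t) (act t)) \<theta> s'' \<ge> \<kappa>"
    and A3: "\<And>s a. \<exists>s'\<in>Ssa s a. \<phi> s a s' = 0"
    and theta_hat_in: "\<And>t. t \<ge> 1 \<Longrightarrow> \<theta>hat (t + 1) \<in> cball 0 L\<theta>"
    and Sigma_1: "\<Sigma> 1 = mat lam"
    and Sigma_step: "\<And>t. t \<ge> 1 \<Longrightarrow>
           \<Sigma> (t + 1) = \<Sigma> t + mnl_hess (\<phi> (st t) (act t)) (Ssa (st t) (act t)) (\<theta>hat (t + 1))"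
    and ep_first: "tk 1 = 1"
    and ep_last: "tk (K + 1) = T + 1"
    and ep_mono: "\<And>k. 1 \<le> k \<Longrightarrow> k \<le> K \<Longrightarrow> tk k < tk (k + 1)"
    and ep_within: "\<And>k t. 1 \<le> k \<Longrightarrow> k \<le> K \<Longrightarrow> tk k \<le> t \<Longrightarrow> t < tk (k + 1) \<Longrightarrow>
           det (\<Sigma> t) \<le> 2 * det (\<Sigma> (tk k))"
    and ep_switch: "\<And>k. 1 \<le> k \<Longrightarrow> k < K \<Longrightarrow> det (\<Sigma> (tk (k + 1))) > 2 * det (\<Sigma> (tk k))"
    and beta_pos: "\<And>t. \<beta> t > 0"
    and beta_mono: "mono \<beta>"
    and lam_ge: "lam \<ge> L\<phi>\<^sup>2"
  shows "(\<Sum>k = 1..K. \<Sum>t = tk k..<tk (k + 1). Bsq \<beta> \<Sigma> \<phi> Ssa (tk k) (st t) (act t))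
         \<le> 12 * real CARD('d) / \<kappa> * (\<beta> T)\<^sup>2
            * ln (1 + real T * real (mnl_U Ssa) * L\<phi>\<^sup>2 / (lam * real CARD('d)))"
proof -
  define d where "d = real CARD('d)"
  have d_pos: "0 < d" by (simp add: d_def)
  have Ssa_ne: "Ssa s a \<noteq> {}" for s a using A3[of s a] by auto
  have L0: "0 \<le> L\<phi>" using A1_phi[of undefined undefined undefined] norm_ge_zero order_trans by blast
  have LHS_nonneg: "0 \<le> Bsq \<beta> \<Sigma> \<phi> Ssa n s a" if "good (\<Sigma> n)" for n s a
  proof -
    obtain s' where "s' \<in> Ssa s a" using Ssa_ne by blast
    then have "wnorm_sq_inv (\<Sigma> n) (\<phi> s a s') \<le> Max ((\<lambda>s'. wnorm_sq_inv (\<Sigma> n) (\<phi> s a s')) ` Ssa s a)"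
      using Ssa_fin by (intro Max_ge) auto
    moreover have "0 \<le> wnorm_sq_inv (\<Sigma> n) (\<phi> s a s')" by (rule wn_nonneg[OF that])
    ultimately show ?thesis unfolding Bsq_def by simp
  qed
  show ?thesis
  proof (cases "lam > 0")
    case False
    have "L\<phi>^2 \<le> 0" using False lam_ge by linarith
    then have L00: "L\<phi> = 0" by (simp add: power2_eq_square) (metis L0 mult_eq_0_iff less_eq_real_def zero_le_square order_antisym_conv)
    then have phi0: "\<phi> s a s' = 0" for s a s' using A1_phi[of s a s'] by simp
    have "Bsq \<beta> \<Sigma> \<phi> Ssa n s a = 0" for n s a
    proof -
      have "(\<lambda>s'. wnorm_sq_inv (\<Sigma> n) (\<phi> s a s')) ` Ssa s a = {0}"
        using Ssa_ne[of s a] by (auto simp: phi0 wnorm_sq_inv_def)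
      then show ?thesis by (simp add: Bsq_def)
    qed
    then show ?thesis using L00 by simp
  next
    case lam_pos: True
    define S where "S = (\<lambda>t. Ssa (st t) (act t))"
    define ph where "ph = (\<lambda>t. \<phi> (st t) (act t))"
    define ld where "ld = (\<lambda>t. ln (det (\<Sigma> t)))"
    have S_fin: "finite (S t)" and S_ne: "S t \<noteq> {}" for t
      using Ssa_fin Ssa_ne by (auto simp: S_def)
    have sstep: "\<Sigma> (t + 1) = \<Sigma> t + mnl_hess (ph t) (S t) (\<theta>hat (t + 1))" if "t \<ge> 1" for t
      using Sigma_step[OF that] by (simp add: S_def ph_def)
    have "\<forall>t. \<exists>s'. s' \<in> S t \<and> ph t s' = 0" using A3 by (auto simp: S_def ph_def)
    then obtain s0 where s0': "\<forall>t. s0 t \<in> S t \<and> ph t (s0 t) = 0" using choice[of "\<lambda>t s'. s' \<in> S t \<and> ph t s' = 0"] by blast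
    then have s0: "\<And>t. s0 t \<in> S t" "\<And>t. ph t (s0 t) = 0" by auto
    have kap_t: "\<kappa> \<le> mnl_prob (ph t) (S t) (\<theta>hat (t + 1)) s' * mnl_prob (ph t) (S t) (\<theta>hat (t + 1)) s''"
      if "t \<ge> 1" "s' \<in> S t" "s'' \<in> S t" for t s' s''
      using A2[OF that(1) theta_hat_in[OF that(1)]] that by (simp add: S_def ph_def)
    have g1: "good (\<Sigma> 1)" unfolding Sigma_1 by (rule good_mat(1)[OF lam_pos])
    have upd_step1: "upd (\<Sigma> t) (\<Sigma> (t + 1))" if "t \<ge> 1" "good (\<Sigma> t)" for t
      unfolding sstep[OF that(1)]
      by (rule hess_step(1)[OF that(2) S_fin S_ne s0(1) s0(2) s0(1) kap_t[OF that(1) s0(1) s0(1)]])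
    have good_all: "good (\<Sigma> t) \<and> upd (\<Sigma> 1) (\<Sigma> t)" if "t \<ge> 1" for t
      using that
    proof (induction t rule: dec_induct)
      case base then show ?case using g1 by (simp add: upd_refl)
    next
      case (step n)
      have "upd (\<Sigma> n) (\<Sigma> (Suc n))" using upd_step1[of n] step by simp
      then show ?case using step upd_trans upd_good by blast
    qed
    have good_t: "good (\<Sigma> t)" if "t \<ge> 1" for t using good_all[OF that] by simp
    have upd_le: "upd (\<Sigma> t) (\<Sigma> t')" if "1 \<le> t" "t \<le> t'" for t t'
      using that(2)
    proof (induction t' rule: dec_induct)
      case base then show ?case by (simp add: upd_refl)
    next
      case (step n)
      have "upd (\<Sigma> n) (\<Sigma> (Suc n))" using upd_step1[of n] step good_t that(1) by simp
      then show ?case using step upd_trans by blast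
    qed
    have det_pos: "0 < det (\<Sigma> t)" if "t \<ge> 1" for t using good_t[OF that] by (simp add: good_def)
    have wn_small: "\<kappa> * wnorm_sq_inv (\<Sigma> t) (ph t j) \<le> 1" if "t \<ge> 1" for t j
    proof -
      have "wnorm_sq_inv (\<Sigma> t) (ph t j) \<le> wnorm_sq_inv (\<Sigma> 1) (ph t j)"
        by (rule upd_wn_le[OF good_all[OF that, THEN conjunct2] g1])
      also have "\<dots> = (ph t j \<bullet> ph t j) / lam" unfolding Sigma_1 by (rule good_mat(3)[OF lam_pos])
      also have "\<dots> \<le> 1"
      proof -
        have "ph t j \<bullet> ph t j = (norm (ph t j))^2" by (simp add: power2_norm_eq_inner)
        also have "\<dots> \<le> L\<phi>^2" using A1_phi by (simp add: ph_def power_mono)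
        finally show ?thesis using lam_ge lam_pos by simp
      qed
      finally have "wnorm_sq_inv (\<Sigma> t) (ph t j) \<le> 1" .
      moreover have "0 \<le> wnorm_sq_inv (\<Sigma> t) (ph t j)" by (rule wn_nonneg[OF good_t[OF that]])
      ultimately show ?thesis using kappa
        by (metis less_eq_real_def mult_le_one)
    qed
    have Dbound: "\<kappa> * wnorm_sq_inv (\<Sigma> t) (ph t j) \<le> 2 * (ld (t + 1) - ld t)"
      if "t \<ge> 1" "j \<in> S t" for t j
    proof -
      define u where "u = \<kappa> * wnorm_sq_inv (\<Sigma> t) (ph t j)"
      have u0: "0 \<le> u" unfolding u_def using kappa wn_nonneg[OF good_t[OF that(1)]] by simp
      have u1: "u \<le> 1" unfolding u_def by (rule wn_small[OF that(1)])
      have "det (\<Sigma> t) * (1 + u) \<le> det (\<Sigma> (t + 1))"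
        unfolding sstep[OF that(1)] u_def
        by (rule hess_step(2)[OF good_t[OF that(1)] S_fin S_ne s0(1) s0(2) that(2) kap_t[OF that(1) s0(1) that(2)]])
      then have "ln (det (\<Sigma> t) * (1 + u)) \<le> ld (t + 1)"
        unfolding ld_def using det_pos[OF that(1)] det_pos[of "t+1"] u0 by (subst ln_le_cancel_iff) auto
      then have "ld t + ln (1 + u) \<le> ld (t + 1)"
        unfolding ld_def using det_pos[OF that(1)] u0 by (simp add: ln_mult)
      then have "u \<le> 2 * (ld (t + 1) - ld t)" using ln_one_plus_half[OF u0 u1] by argo
      then show ?thesis unfolding u_def .
    qed
    have tk_mono: "tk k \<le> tk k'" if "1 \<le> k" "k \<le> k'" "k' \<le> K + 1" for k k'
      using that(2,3)
    proof (induction k' rule: dec_induct)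
      case base then show ?case by simp
    next
      case (step n)
      have "tk n < tk (n + 1)" using ep_mono[of n] step that(1) by simp
      then show ?case using step by simp
    qed
    define D where "D = (\<lambda>t. ld (t + 1) - ld t)"
    define bT where "bT = (\<beta> T)^2"
    have Ebound: "Bsq \<beta> \<Sigma> \<phi> Ssa (tk k) (st t) (act t) \<le> 12 / \<kappa> * bT * D t"
      if k: "1 \<le> k" "k \<le> K" and t: "tk k \<le> t" "t < tk (k + 1)" for k t
    proof -
      have tk1: "1 \<le> tk k" using tk_mono[of 1 k] k ep_first by simp
      have t1: "1 \<le> t" using tk1 t by simp
      have tT: "tk k \<le> T" using tk_mono[of "k+1" "K+1"] k t ep_last by simp
      define M where "M = Max ((\<lambda>s'. wnorm_sq_inv (\<Sigma> (tk k)) (ph t s')) ` S t)"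
      have B: "Bsq \<beta> \<Sigma> \<phi> Ssa (tk k) (st t) (act t) = 3 * (\<beta> (tk k))^2 * M"
        by (simp add: Bsq_def M_def S_def ph_def)
      have "M \<in> (\<lambda>s'. wnorm_sq_inv (\<Sigma> (tk k)) (ph t s')) ` S t"
        unfolding M_def by (rule Max_in) (use S_fin[of t] S_ne[of t] in auto)
      then obtain j where j: "j \<in> S t" "M = wnorm_sq_inv (\<Sigma> (tk k)) (ph t j)" by auto
      have M0: "0 \<le> M" using j(2) wn_nonneg[OF good_t[OF tk1]] by simp
      have "M \<le> det (\<Sigma> t) / det (\<Sigma> (tk k)) * wnorm_sq_inv (\<Sigma> t) (ph t j)"
        unfolding j(2) by (rule upd_ratio[OF upd_le[OF tk1 t(1)] good_t[OF tk1]])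
      also have "\<dots> \<le> 2 * wnorm_sq_inv (\<Sigma> t) (ph t j)"
      proof (rule mult_right_mono)
        show "det (\<Sigma> t) / det (\<Sigma> (tk k)) \<le> 2"
          using ep_within[OF k t] det_pos[OF tk1] by (simp add: divide_le_eq)
        show "0 \<le> wnorm_sq_inv (\<Sigma> t) (ph t j)" by (rule wn_nonneg[OF good_t[OF t1]])
      qed
      also have "\<dots> \<le> 2 * (2 * D t / \<kappa>)"
        using Dbound[OF t1 j(1)] kappa by (simp add: D_def pos_le_divide_eq mult.commute)
      finally have MD: "M \<le> 4 / \<kappa> * D t" by simp
      have bb: "(\<beta> (tk k))^2 \<le> bT"
        unfolding bT_def using beta_mono tT beta_pos
        by (intro power_mono) (auto simp: mono_def less_imp_le)
      have bT0: "0 \<le> bT" by (simp add: bT_def)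
      have "3 * (\<beta> (tk k))^2 * M \<le> 3 * bT * (4 / \<kappa> * D t)"
        using bb MD M0 bT0 by (intro mult_mono) auto
      then show ?thesis using B by simp
    qed
    have sumD: "(\<Sum>k = 1..K'. \<Sum>t = tk k..<tk (k + 1). D t) = (\<Sum>t = 1..<tk (K' + 1). D t)"
      if "K' \<le> K" for K'
      using that
    proof (induction K')
      case 0 then show ?case using ep_first by simp
    next
      case (Suc n)
      have "(\<Sum>k = 1..Suc n. \<Sum>t = tk k..<tk (k + 1). D t)
          = (\<Sum>t = 1..<tk (Suc n). D t) + (\<Sum>t = tk (Suc n)..<tk (Suc (Suc n)). D t)"
        using Suc by simp
      also have "\<dots> = (\<Sum>t = 1..<tk (Suc (Suc n)). D t)"
      proof (rule sum.atLeastLessThan_concat)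
        show "1 \<le> tk (Suc n)" using tk_mono[of 1 "Suc n"] ep_first Suc by simp
        show "tk (Suc n) \<le> tk (Suc (Suc n))" using tk_mono[of "Suc n" "Suc (Suc n)"] Suc by simp
      qed
      finally show ?case by simp
    qed
    have telescope: "(\<Sum>t = 1..<T + 1. D t) = ld (T + 1) - ld 1"
      using sum_Suc_diff'[of 1 "T+1" ld] by (simp add: D_def)
    have LHS_le: "(\<Sum>k = 1..K. \<Sum>t = tk k..<tk (k + 1). Bsq \<beta> \<Sigma> \<phi> Ssa (tk k) (st t) (act t))
        \<le> (\<Sum>k = 1..K. \<Sum>t = tk k..<tk (k + 1). 12 / \<kappa> * bT * D t)"
      by (intro sum_mono Ebound) auto
    also have "\<dots> = 12 / \<kappa> * bT * (\<Sum>k = 1..K. \<Sum>t = tk k..<tk (k + 1). D t)"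
      by (simp add: sum_distrib_left)
    also have "\<dots> = 12 / \<kappa> * bT * (ld (T + 1) - ld 1)"
      using sumD[of K] ep_last telescope by simp
    finally have main: "(\<Sum>k = 1..K. \<Sum>t = tk k..<tk (k + 1). Bsq \<beta> \<Sigma> \<phi> Ssa (tk k) (st t) (act t))
        \<le> 12 / \<kappa> * bT * (ld (T + 1) - ld 1)" .
    have tr_bound: "trace (\<Sigma> t) \<le> d * lam + real (t - 1) * L\<phi>^2" if "t \<ge> 1" for t
      using that
    proof (induction t rule: dec_induct)
      case base then show ?case unfolding Sigma_1 trace_mat d_def by simp
    next
      case (step n)
      have "trace (\<Sigma> (Suc n)) = trace (\<Sigma> n) + trace (mnl_hess (ph n) (S n) (\<theta>hat (n + 1)))"
      proof -
        have e: "\<Sigma> (Suc n) = \<Sigma> n + mnl_hess (ph n) (S n) (\<theta>hat (n + 1))"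
          using sstep[of n] step(1) by simp
        show ?thesis by (simp only: e trace_add)
      qed
      also have "\<dots> \<le> d * lam + real (n - 1) * L\<phi>^2 + L\<phi>^2"
      proof -
        have "trace (mnl_hess (ph n) (S n) (\<theta>hat (n + 1))) \<le> L\<phi>^2"
          by (rule hess_trace[OF S_fin S_ne]) (simp add: ph_def A1_phi)
        then show ?thesis using step(3) by simp
      qed
      also have "\<dots> = d * lam + real (Suc n - 1) * L\<phi>^2"
        using step(1) by (simp add: of_nat_diff algebra_simps)
      finally show ?case .
    qed
    have gT: "good (\<Sigma> (T + 1))" by (rule good_t) simp
    have trT: "trace (\<Sigma> (T + 1)) \<le> d * lam + real T * L\<phi>^2" using tr_bound[of "T+1"] by simp
    have trpos: "0 < trace (\<Sigma> (T + 1))" by (rule good_trace_pos[OF gT])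
    define X where "X = (d * lam + real T * L\<phi>^2) / d"
    have Xpos: "0 < X" unfolding X_def using d_pos lam_pos by (intro divide_pos_pos add_pos_nonneg) auto
    have "det (\<Sigma> (T + 1)) \<le> (trace (\<Sigma> (T + 1)) / CARD('d))^CARD('d)" by (rule det_le_trace[OF gT])
    also have "\<dots> \<le> X^CARD('d)"
      unfolding X_def d_def using trT trpos d_pos
      by (intro power_mono divide_right_mono) (auto simp: d_def)
    finally have detT: "det (\<Sigma> (T + 1)) \<le> X^CARD('d)" .
    have ldT: "ld (T + 1) \<le> d * ln X"
    proof -
      have "ld (T + 1) \<le> ln (X^CARD('d))"
        unfolding ld_def using detT det_pos[of "T+1"] Xpos by (subst ln_le_cancel_iff) auto
      also have "\<dots> = d * ln X" using Xpos by (simp add: ln_realpow d_def)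
      finally show ?thesis .
    qed
    have ld1: "ld 1 = d * ln lam"
      unfolding ld_def Sigma_1 good_mat(2)[OF lam_pos] using lam_pos by (simp add: ln_realpow d_def)
    have "ld (T + 1) - ld 1 \<le> d * (ln X - ln lam)" using ldT ld1 by (simp add: algebra_simps)
    also have "ln X - ln lam = ln (1 + real T * L\<phi>^2 / (lam * d))"
    proof -
      have "ln X - ln lam = ln (X / lam)" using Xpos lam_pos by (simp add: ln_div)
      also have "X / lam = 1 + real T * L\<phi>^2 / (lam * d)"
        unfolding X_def using d_pos lam_pos by (simp add: field_simps)
      finally show ?thesis .
    qed
    finally have diff: "ld (T + 1) - ld 1 \<le> d * ln (1 + real T * L\<phi>^2 / (lam * d))" .
    have U1: "1 \<le> real (mnl_U Ssa)"
    proof -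
      obtain s :: 's and a :: 'a where True by simp
      have "card (Ssa s a) \<le> mnl_U Ssa"
        unfolding mnl_U_def by (rule Max_ge) (auto intro: image_eqI[where x="(s,a)"])
      moreover have "1 \<le> card (Ssa s a)" using Ssa_fin[of s a] Ssa_ne[of s a]
        by (simp add: Suc_le_eq card_gt_0_iff)
      ultimately show ?thesis by simp
    qed
    have lnU: "ln (1 + real T * L\<phi>^2 / (lam * d)) \<le> ln (1 + real T * real (mnl_U Ssa) * L\<phi>^2 / (lam * d))"
    proof -
      have a0: "0 \<le> real T * L\<phi>^2 / (lam * d)" using lam_pos d_pos by simp
      have "real T * L\<phi>^2 / (lam * d) \<le> real T * real (mnl_U Ssa) * L\<phi>^2 / (lam * d)"
      proof -
        have "real T * 1 \<le> real T * real (mnl_U Ssa)" using U1 by (intro mult_left_mono) auto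
        then have "real T * L\<phi>^2 \<le> real T * real (mnl_U Ssa) * L\<phi>^2" by (intro mult_right_mono) auto
        then show ?thesis using lam_pos d_pos by (intro divide_right_mono) auto
      qed
      then show ?thesis using a0 by (subst ln_le_cancel_iff) auto
    qed
    have c0: "0 \<le> 12 / \<kappa> * bT" using kappa by (simp add: bT_def)
    have "(\<Sum>k = 1..K. \<Sum>t = tk k..<tk (k + 1). Bsq \<beta> \<Sigma> \<phi> Ssa (tk k) (st t) (act t))
        \<le> 12 / \<kappa> * bT * (d * ln (1 + real T * real (mnl_U Ssa) * L\<phi>^2 / (lam * d)))"
    proof -
      have "ld (T + 1) - ld 1 \<le> d * ln (1 + real T * real (mnl_U Ssa) * L\<phi>^2 / (lam * d))"
        using diff lnU d_pos by (meson mult_left_mono less_imp_le order_trans)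
      then show ?thesis using main c0 by (meson mult_left_mono order_trans)
    qed
    then show ?thesis by (simp add: d_def bT_def algebra_simps)
  qed
qed

end
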